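(* Let $k\ge 1$. If $C$ is an odd cycle that is a strict prime $k$th-power distance graph, then every cycle with more vertices than $C$ is also a strict prime $k$th-power distance graph.
   Context: A graph $G$ is a strict prime $k$th-power distance graph if there is an injective map $L:V(G)\to\mathbb{Z}$ such that for every edge $uv$ of $G$, $|L(u)-L(v)|=p^k$ for some prime $p$ (the prime may depend on the edge). *)

theory Defs
  imports "HOL-Computational_Algebra.Primes"
begin

definition strict_prime_power_distance_graph ::
  "nat \<Rightarrow> 'a set \<Rightarrow> ('a \<Rightarrow> 'a \<Rightarrow> bool) \<Rightarrow> bool" where
  "strict_prime_power_distance_graph k V E \<longleftrightarrow>
     (\<exists>L :: 'a \<Rightarrow> int. inj_on L V \<and>
        (\<forall>u\<in>V. \<forall>v\<in>V. E u v \<longrightarrow>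
           (\<exists>p :: nat. prime p \<and> \<bar>L u - L v\<bar> = int p ^ k)))"

definition cycle_vertices :: "nat \<Rightarrow> nat set" where
  "cycle_vertices n = {..<n}"

definition cycle_edge :: "nat \<Rightarrow> nat \<Rightarrow> nat \<Rightarrow> bool" where
  "cycle_edge n i j \<longleftrightarrow> i < n \<and> j < n \<and> (j = Suc i mod n \<or> i = Suc j mod n)"

end

theory Submission
  imports Defs
begin

definition ppd :: "nat \<Rightarrow> int \<Rightarrow> bool" where
  "ppd k x \<longleftrightarrow> (\<exists>p::nat. prime p \<and> \<bar>x\<bar> = int p ^ k)"

lemma ppd_neg: "ppd k (a - b) = ppd k (b - a)"
  unfolding ppd_def by (simp add: abs_minus_commute)

definition good :: "nat \<Rightarrow> nat \<Rightarrow> (nat \<Rightarrow> int) \<Rightarrow> bool" where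
  "good k m L \<longleftrightarrow> inj_on L {..<m} \<and> (\<forall>i. Suc i < m \<longrightarrow> ppd k (L (Suc i) - L i))
     \<and> ppd k (L (m-1) - L 0)"

lemma from_graph:
  assumes "m \<ge> 2" "strict_prime_power_distance_graph k (cycle_vertices m) (cycle_edge m)"
  shows "\<exists>L. good k m L"
proof -
  obtain L where inj: "inj_on L {..<m}" and E: "\<forall>u\<in>{..<m}. \<forall>v\<in>{..<m}. cycle_edge m u v \<longrightarrow>
           (\<exists>p :: nat. prime p \<and> \<bar>L u - L v\<bar> = int p ^ k)"
    using assms(2) unfolding strict_prime_power_distance_graph_def cycle_vertices_def by blast
  have 1: "ppd k (L (Suc i) - L i)" if "Suc i < m" for i
  proof -
    have "cycle_edge m (Suc i) i" using that unfolding cycle_edge_def by auto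
    with E that have "\<exists>p :: nat. prime p \<and> \<bar>L (Suc i) - L i\<bar> = int p ^ k" by auto
    thus ?thesis unfolding ppd_def .
  qed
  have "cycle_edge m (m-1) 0" using assms(1) unfolding cycle_edge_def by auto
  with E assms(1) have "\<exists>p :: nat. prime p \<and> \<bar>L (m-1) - L 0\<bar> = int p ^ k" by auto
  hence "ppd k (L (m-1) - L 0)" unfolding ppd_def .
  with 1 inj show ?thesis unfolding good_def by blast
qed

lemma to_graph:
  assumes "m \<ge> 2" "good k m L"
  shows "strict_prime_power_distance_graph k (cycle_vertices m) (cycle_edge m)"
proof -
  have inj: "inj_on L {..<m}" and C: "\<And>i. Suc i < m \<Longrightarrow> ppd k (L (Suc i) - L i)"
    and W: "ppd k (L (m-1) - L 0)" using assms(2) unfolding good_def by auto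
  have "ppd k (L u - L v)" if "u < m" "v < m" "cycle_edge m u v" for u v
  proof -
    have "v = Suc u mod m \<or> u = Suc v mod m" using that(3) unfolding cycle_edge_def by auto
    thus ?thesis
    proof
      assume h: "v = Suc u mod m"
      show ?thesis
      proof (cases "Suc u < m")
        case True thus ?thesis using h C[of u] by (simp add: ppd_neg)
      next
        case False
        hence "Suc u = m" using that by simp
        hence "u = m - 1" "v = 0" using h by auto
        thus ?thesis using W by simp
      qed
    next
      assume h: "u = Suc v mod m"
      show ?thesis
      proof (cases "Suc v < m")
        case True thus ?thesis using h C[of v] by simp
      next
        case False
        hence "Suc v = m" using that by simp
        hence "v = m - 1" "u = 0" using h by auto
        thus ?thesis using W by (simp add: ppd_neg)
      qed
    qed
  qed
  thus ?thesis using inj unfolding strict_prime_power_distance_graph_def cycle_vertices_def ppd_def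
    by blast
qed

lemma even_good:
  assumes "k \<ge> 1" "even m" "m \<ge> 4"
  shows "\<exists>L. good k m L"
proof -
  define t where "t = m div 2"
  have mt: "m = 2*t" "t \<ge> 2" using assms t_def by auto
  define a :: int where "a = 2^k"
  define b :: int where "b = 3^k"
  have a2: "even a" using assms(1) unfolding a_def by simp
  have bodd: "odd b" unfolding b_def by simp
  have apos: "a > 0" unfolding a_def by simp
  define L where "L i = (if i < t then int i * a else int (m - 1 - i) * a + b)" for i
  have pa1: "ppd k a" unfolding ppd_def a_def by (rule exI[of _ 2]) simp
  have pa2: "ppd k (-a)" unfolding ppd_def a_def by (rule exI[of _ 2]) simp
  have pa3: "ppd k b" unfolding ppd_def b_def by (rule exI[of _ 3]) simp
  note pa = pa1 pa2 pa3
  have inj: "inj_on L {..<m}"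
  proof (rule inj_onI)
    fix x y assume x: "x \<in> {..<m}" and y: "y \<in> {..<m}" and e: "L x = L y"
    show "x = y"
    proof (cases "x < t"; cases "y < t")
      assume "x < t" "y < t"
      thus ?thesis using e apos unfolding L_def by simp
    next
      assume "x < t" "\<not> y < t"
      hence "int x * a = int (m - 1 - y) * a + b" using e unfolding L_def by simp
      hence "b = (int x - int (m-1-y)) * a" by (simp add: algebra_simps)
      hence "even b" using a2 by simp
      thus ?thesis using bodd by simp
    next
      assume "\<not> x < t" "y < t"
      hence "int y * a = int (m - 1 - x) * a + b" using e unfolding L_def by simp
      hence "b = (int y - int (m-1-x)) * a" by (simp add: algebra_simps)
      hence "even b" using a2 by simp
      thus ?thesis using bodd by simp
    next
      assume "\<not> x < t" "\<not> y < t"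
      hence "int (m-1-x) = int (m-1-y)" using e apos unfolding L_def by simp
      thus ?thesis using x y by simp
    qed
  qed
  have C: "ppd k (L (Suc i) - L i)" if si: "Suc i < m" for i
  proof -
    consider "Suc i < t" | "Suc i = t" | "i \<ge> t" by linarith
    thus ?thesis
    proof cases
      case 1
      hence "L (Suc i) - L i = a" unfolding L_def by (simp add: algebra_simps)
      thus ?thesis using pa by simp
    next
      case 2
      hence "m - 1 - Suc i = i" using mt by simp
      hence "L (Suc i) - L i = b" using 2 unfolding L_def by simp
      thus ?thesis using pa by simp
    next
      case 3
      have "int (m - 1 - i) = int (m - 1 - Suc i) + 1" using si by simp
      hence "L (Suc i) - L i = -a" using 3 unfolding L_def by (simp add: algebra_simps)
      thus ?thesis using pa by simp
    qed
  qed
  have "L (m-1) - L 0 = b" using mt unfolding L_def by simp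
  hence "ppd k (L (m-1) - L 0)" using pa by simp
  thus ?thesis using inj C unfolding good_def by blast
qed

lemma step_good:
  assumes "k \<ge> 1" "n \<ge> 2" "good k n L"
  shows "\<exists>L'. good k (n+2) L'"
proof -
  have inj: "inj_on L {..<n}" and C: "\<And>i. Suc i < n \<Longrightarrow> ppd k (L (Suc i) - L i)"
    and W: "ppd k (L (n-1) - L 0)" using assms(3) unfolding good_def by auto
  define M where "M = (\<Sum>i<n. \<bar>L i\<bar>)"
  have bnd: "\<bar>L i\<bar> \<le> M" if "i < n" for i
    unfolding M_def using that by (intro member_le_sum) auto
  obtain q :: nat where q: "prime q" "q > nat (2*M)" using bigger_prime by blast
  define Q :: int where "Q = int q ^ k"
  have q1: "int q \<ge> 1" using prime_gt_0_nat[OF q(1)] by simp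
  have "int q ^ 1 \<le> int q ^ k" by (rule power_increasing[OF assms(1) q1])
  hence "int q \<le> Q" unfolding Q_def by simp
  hence QM: "Q > 2*M" using q(2) by linarith
  have pQ: "ppd k Q" "ppd k (-Q)" unfolding ppd_def Q_def using q(1) by auto
  have far: "L i \<noteq> L j + Q" if "i < n" "j < n" for i j
    using bnd[OF that(1)] bnd[OF that(2)] QM by linarith
  have farA: "L (n-1) + Q \<noteq> L i" "L 0 + Q \<noteq> L i" if "i < n" for i
    using far[OF that, of "n-1"] far[OF that, of 0] assms(2) by auto
  define L' where "L' i = (if i < n then L i else if i = n then L (n-1) + Q else L 0 + Q)" for i
  have inj': "inj_on L' {..<n+2}"
  proof (rule inj_onI)
    fix x y assume x: "x \<in> {..<n+2}" and y: "y \<in> {..<n+2}" and e: "L' x = L' y"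
    have n1: "n - 1 < n" "0 < n" "n - 1 \<noteq> 0" using assms(2) by auto
    have d: "L (n-1) \<noteq> L 0" using inj n1 by (metis inj_onD lessThan_iff)
    consider "x < n" | "x = n" | "x = n+1" using x by force
    then show "x = y"
    proof cases
      case 1
      consider "y < n" | "y = n" | "y = n+1" using y by force
      then show ?thesis
        by cases (use 1 e inj far n1 farA in \<open>auto simp: L'_def dest: inj_onD\<close>)
    next
      case 2
      consider "y < n" | "y = n" | "y = n+1" using y by force
      then show ?thesis
        by cases (use 2 e far n1 d in \<open>auto simp: L'_def dest: farA\<close>)
    next
      case 3
      consider "y < n" | "y = n" | "y = n+1" using y by force
      then show ?thesis
        by cases (use 3 e far n1 d in \<open>auto simp: L'_def dest: farA\<close>)
    qed
  qed
  have C': "ppd k (L' (Suc i) - L' i)" if si: "Suc i < n + 2" for i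
  proof -
    consider "Suc i < n" | "Suc i = n" | "i = n" using si by fastforce
    thus ?thesis
    proof cases
      case 1 thus ?thesis using C[OF 1] unfolding L'_def by simp
    next
      case 2
      hence "i = n - 1" by simp
      hence "L' (Suc i) - L' i = Q" using 2 unfolding L'_def by simp
      thus ?thesis using pQ by simp
    next
      case 3
      hence "L' (Suc i) - L' i = L 0 - L (n-1)" unfolding L'_def by simp
      thus ?thesis using W by (simp add: ppd_neg)
    qed
  qed
  have "L' (n+2-1) - L' 0 = Q" using assms(2) unfolding L'_def by simp
  hence "ppd k (L' (n+2-1) - L' 0)" using pQ by simp
  thus ?thesis using inj' C' unfolding good_def by blast
qed

theorem mainTheorem14:
  fixes k n m :: nat
  assumes "k \<ge> 1"
    and "n \<ge> 3" and "odd n"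
    and "strict_prime_power_distance_graph k (cycle_vertices n) (cycle_edge n)"
    and "m > n"
  shows "strict_prime_power_distance_graph k (cycle_vertices m) (cycle_edge m)"
proof -
  have "\<exists>L. good k m L"
  proof (cases "even m")
    case True
    
    have "m \<ge> 4" using assms(2,5) by linarith
    thus ?thesis using even_good assms(1) True by blast
  next
    case False
    then obtain j where j: "m = n + 2*j" using assms(3,5)
    proof -
      have "even (m - n)" using False assms(3,5) by simp
      then obtain j where "m - n = 2*j" by blast
      thus ?thesis using assms(5) by (intro that[of j]) simp
    qed
    have "\<exists>L. good k (n + 2*j) L" for j
    proof (induction j)
      case 0 thus ?case using from_graph assms by simp
    next
      case (Suc j)
      then obtain L where "good k (n+2*j) L" by blast
      from step_good[OF assms(1) _ this] assms(2) show ?case by simp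
    qed
    thus ?thesis using j by simp
  qed
  then obtain L where "good k m L" by blast
  thus ?thesis using to_graph assms by simp
qed

end
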